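(* Let $A\in\mathbb{R}^{n\times n}$, $B\in\mathbb{R}^{n\times m}$, $C\in\mathbb{R}^{p\times n}$, $D\in\mathbb{R}^{p\times m}$ and $K\in\mathbb{N}$, and let $$\mathcal{O}_K=\begin{bmatrix} C^\top & (CA)^\top & \cdots & (CA^{K-1})^\top\end{bmatrix}^\top\in\mathbb{R}^{pK\times n}.$$ Assume $\mathcal{O}_K$ has full column rank, and set $\mathcal{W}_o:=\mathcal{O}_K^\top\mathcal{O}_K$. Let $\Sigma_v\in\mathbb{R}^{n\times n}$ with $\Sigma_v\succ 0$. Consider the matrix equation $$(\mathcal{O}_K^\top X\mathcal{O}_K)^{-1}=\Sigma_v \qquad (\ast)$$ in the unknown $X\in\mathbb{R}^{pK\times pK}$, and the set $S_X:=\{X\in\mathbb{R}^{pK\times pK}\mid (\ast)\text{ holds}\}$. Then: (i) $S_X$ is nonempty and $$S_X=\{N^\top N+R-MRM \mid R\in\mathbb{R}^{pK\times pK}\},$$ where $M:=\mathcal{O}_K\mathcal{W}_o^{-1}\mathcal{O}_K^\top$ and $N:=\Sigma_v^{-1/2}\mathcal{W}_o^{-1}\mathcal{O}_K^\top$. (ii) The set $S_X^+:=\{X\in S_X\mid X\succ 0\}$ is nonempty. (iii) If $pK=n$, then $S_X^+$ is a singleton, namely $S_X^+=\{N^\top N\}$.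
   Context: $\Sigma_v^{-1/2}$ denotes the symmetric positive definite square root of $\Sigma_v^{-1}$. For a square matrix, $X\succ 0$ means $X$ is symmetric positive definite. Equation $(\ast)$ includes the requirement that $\mathcal{O}_K^\top X\mathcal{O}_K$ be invertible. *)

theory Defs
  imports "Jordan_Normal_Form.Gauss_Jordan_Elimination" "Jordan_Normal_Form.DL_Rank"
begin

definition obs_mat :: "nat \<Rightarrow> nat \<Rightarrow> nat \<Rightarrow> real mat \<Rightarrow> real mat \<Rightarrow> real mat" where
  "obs_mat n p K A C = mat (p * K) n (\<lambda>(i, j). (C * A ^\<^sub>m (i div p)) $$ (i mod p, j))"

definition pos_def :: "nat \<Rightarrow> real mat \<Rightarrow> bool" where
  "pos_def k X \<longleftrightarrow> X \<in> carrier_mat k k \<and> X\<^sup>T = X \<and>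
     (\<forall>x \<in> carrier_vec k. x \<noteq> 0\<^sub>v k \<longrightarrow> x \<bullet> (X *\<^sub>v x) > 0)"

text \<open>Matrix inverse (meaningful for invertible square matrices).\<close>
definition minv :: "real mat \<Rightarrow> real mat" where
  "minv X = the (mat_inverse X)"

definition inv_sqrt :: "real mat \<Rightarrow> real mat" where
  "inv_sqrt S = (THE R. pos_def (dim_row S) R \<and> R * R = minv S)"

end

theory Submission
  imports Defs "Jordan_Normal_Form.Char_Poly"
begin

lemma sym_real_eigen:
  fixes A :: "real mat"
  assumes A: "A \<in> carrier_mat k k" and sym: "A\<^sup>T = A" and k: "k > 0"
  shows "\<exists>e v. v \<in> carrier_vec k \<and> v \<noteq> 0\<^sub>v k \<and> A *\<^sub>v v = e \<cdot>\<^sub>v v"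
proof -
  let ?Ac = "map_mat complex_of_real A"
  have Ac: "?Ac \<in> carrier_mat k k" using A by simp
  obtain as where cp: "char_poly ?Ac = (\<Prod>a\<leftarrow>as. [:-a,1:])" and len: "length as = k"
    using char_poly_factorized[OF Ac] by blast
  obtain a where a: "a \<in> set as" using len k by (cases as) auto
  have "poly (char_poly ?Ac) a = 0" unfolding cp poly_prod_list
    using a by (induct as) auto
  hence "eigenvalue ?Ac a" using eigenvalue_root_char_poly[OF Ac] by simp
  then obtain v where ev: "eigenvector ?Ac v a" unfolding eigenvalue_def by auto
  then have v: "v \<in> carrier_vec k" "v \<noteq> 0\<^sub>v k" "?Ac *\<^sub>v v = a \<cdot>\<^sub>v v"
    unfolding eigenvector_def using Ac by auto
  have Av: "(\<Sum>j<k. of_real (A$$(i,j)) * v$j) = a * v$i" if i: "i < k" for i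
  proof -
    have "(?Ac *\<^sub>v v) $ i = a * v $ i" using v(3) i v(1) by simp
    moreover have "(?Ac *\<^sub>v v) $ i = (\<Sum>j<k. of_real (A$$(i,j)) * v$j)"
      using i A v(1) by (auto simp: mult_mat_vec_def scalar_prod_def lessThan_atLeast0 intro!: sum.cong)
    ultimately show ?thesis by simp
  qed
  define s where "s = (\<Sum>i<k. \<Sum>j<k. cnj (v$i) * of_real (A$$(i,j)) * v$j)"
  define r where "r = (\<Sum>i<k. (cmod (v$i))^2)"
  have s1: "s = a * of_real r"
  proof -
    have "s = (\<Sum>i<k. cnj (v$i) * (\<Sum>j<k. of_real (A$$(i,j)) * v$j))"
      unfolding s_def by (simp add: sum_distrib_left mult.assoc)
    also have "\<dots> = (\<Sum>i<k. a * (cnj (v$i) * v$i))" by (rule sum.cong, simp_all add: Av)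
    also have "\<dots> = a * of_real r" unfolding r_def
      by (simp add: sum_distrib_left complex_norm_square[symmetric] mult.commute)
    finally show ?thesis .
  qed
  have s2: "cnj s = s"
  proof -
    have "cnj s = (\<Sum>i<k. \<Sum>j<k. v$i * of_real (A$$(i,j)) * cnj (v$j))"
      unfolding s_def by simp
    also have "\<dots> = (\<Sum>j<k. \<Sum>i<k. v$i * of_real (A$$(i,j)) * cnj (v$j))"
      by (rule sum.swap)
    also have "\<dots> = s" unfolding s_def
    proof (rule sum.cong[OF refl], rule sum.cong[OF refl])
      fix j i assume "j \<in> {..<k}" "i \<in> {..<k}"
      then have "A$$(i,j) = A$$(j,i)" using sym A
        by (metis carrier_matD index_transpose_mat(1) lessThan_iff)
      then show "v$i * of_real (A$$(i,j)) * cnj (v$j) = cnj (v$j) * of_real (A$$(j,i)) * v$i"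
        by simp
    qed
    finally show ?thesis .
  qed
  have rpos: "r > 0"
  proof -
    obtain i where i: "i < k" "v $ i \<noteq> 0" using v(1,2) by (metis carrier_vecD eq_vecI index_zero_vec)
    have "(cmod (v$i))^2 \<le> r" unfolding r_def
      by (rule member_le_sum, insert i, auto)
    moreover have "(cmod (v$i))^2 > 0" using i by simp
    ultimately show ?thesis by linarith
  qed
  have "Im s = 0" using s2 by (metis cnj.simps(2) neg_equal_zero)
  hence "Im a * r = 0" using s1 by simp
  hence ima: "Im a = 0" using rpos by simp
  define e where "e = Re a"
  have ae: "a = of_real e" unfolding e_def using ima by (simp add: complex_eq_iff)
  have "char_poly ?Ac = map_poly of_real (char_poly A)"
    using of_real_hom.char_poly_hom[OF A] .
  hence "of_real (poly (char_poly A) e) = (0::complex)"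
    using \<open>poly (char_poly ?Ac) a = 0\<close> ae by (simp add: of_real_hom.poly_map_poly)
  hence "eigenvalue A e" using eigenvalue_root_char_poly[OF A] by simp
  then obtain w where "eigenvector A w e" unfolding eigenvalue_def by auto
  thus ?thesis unfolding eigenvector_def using A by auto
qed

lemma householder_vec:
  fixes w :: "real vec" and c :: real
  assumes w: "w \<in> carrier_vec k" and x: "x \<in> carrier_vec k"
  defines "H \<equiv> mat k k (\<lambda>(i,j). (if i = j then 1 else 0) - c * w$i * w$j)"
  shows "H *\<^sub>v x = x - (c * (w \<bullet> x)) \<cdot>\<^sub>v w"
proof (rule eq_vecI)
  show "dim_vec (H *\<^sub>v x) = dim_vec (x - (c * (w \<bullet> x)) \<cdot>\<^sub>v w)" using w x by (simp add: H_def)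
  fix i assume "i < dim_vec (x - (c * (w \<bullet> x)) \<cdot>\<^sub>v w)"
  then have i: "i < k" using w by simp
  have "(H *\<^sub>v x) $ i = (\<Sum>j = 0..<k. ((if i = j then 1 else 0) - c * w$i * w$j) * x$j)"
    using i x unfolding H_def by (simp add: scalar_prod_def row_def)
  also have "\<dots> = (\<Sum>j = 0..<k. (if i = j then x$j else 0) - c * w$i * (w$j * x$j))"
    by (rule sum.cong, auto simp: algebra_simps)
  also have "\<dots> = (\<Sum>j = 0..<k. (if i = j then x$j else 0)) - c * w$i * (\<Sum>j = 0..<k. w$j * x$j)"
    by (simp add: sum_subtractf sum_distrib_left)
  also have "\<dots> = x$i - c * w$i * (w \<bullet> x)" using i x by (simp add: scalar_prod_def)
  finally show "(H *\<^sub>v x) $ i = (x - (c * (w \<bullet> x)) \<cdot>\<^sub>v w) $ i" using i x w by simp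
qed

lemma householder:
  fixes u :: "real vec"
  assumes u: "u \<in> carrier_vec k" "u \<bullet> u = 1" and k: "k > 0"
  shows "\<exists>H. H \<in> carrier_mat k k \<and> H\<^sup>T = H \<and> H * H = 1\<^sub>m k \<and> H *\<^sub>v u = unit_vec k 0"
proof -
  define w where "w = u - unit_vec k 0"
  define c where "c = 2 / (w \<bullet> w)"
  define H where "H = mat k k (\<lambda>(i,j). (if i = j then 1 else 0) - c * w$i * w$j)"
  have w: "w \<in> carrier_vec k" using u unfolding w_def by simp
  have Hx: "H *\<^sub>v x = x - (c * (w \<bullet> x)) \<cdot>\<^sub>v w" if "x \<in> carrier_vec k" for x
    unfolding H_def by (rule householder_vec[OF w that])
  have H: "H \<in> carrier_mat k k" unfolding H_def by simp
  have HT: "H\<^sup>T = H" unfolding H_def by (rule eq_matI, auto)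
  have ww: "w \<bullet> w = 0 \<or> c * (w \<bullet> w) = 2" unfolding c_def by auto
  have w0: "w \<bullet> w = 0 \<Longrightarrow> w = 0\<^sub>v k"
  proof -
    assume "w \<bullet> w = 0"
    then have "(\<Sum>i = 0..<k. w$i * w$i) = 0" using w by (simp add: scalar_prod_def)
    then have "\<forall>i\<in>{0..<k}. w$i * w$i = 0"
      by (subst sum_nonneg_eq_0_iff[symmetric], auto)
    then show "w = 0\<^sub>v k" using w by (intro eq_vecI, auto)
  qed
  have HH: "H *\<^sub>v (H *\<^sub>v x) = x" if x: "x \<in> carrier_vec k" for x
  proof -
    have Hxc: "H *\<^sub>v x \<in> carrier_vec k" using H x by simp
    have wHx: "w \<bullet> (H *\<^sub>v x) = w \<bullet> x - c * (w \<bullet> x) * (w \<bullet> w)"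
      using w x by (simp add: Hx scalar_prod_minus_distrib)
    show ?thesis
    proof (cases "w \<bullet> w = 0")
      case True
      then have "w = 0\<^sub>v k" by (rule w0)
      then have "H *\<^sub>v y = y" if "y \<in> carrier_vec k" for y
        using that by (intro eq_vecI, auto simp: Hx[OF that])
      then show ?thesis using x Hxc by simp
    next
      case False
      then have cw: "c * (w \<bullet> w) = 2" using ww by auto
      show ?thesis unfolding Hx[OF Hxc] wHx
        by (rule eq_vecI, insert x w cw, auto simp: Hx[OF x] algebra_simps)
    qed
  qed
  have HH1: "H * H = 1\<^sub>m k"
  proof (rule eq_matI)
    fix i j assume i: "i < dim_row (1\<^sub>m k)" and j: "j < dim_col (1\<^sub>m k)"
    have "(H * H) $$ (i,j) = (H *\<^sub>v (H *\<^sub>v unit_vec k j)) $ i"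
    proof -
      have "col H j = H *\<^sub>v unit_vec k j" using H j
        by (intro eq_vecI, auto)
      then show ?thesis using i j H by simp
    qed
    also have "\<dots> = 1\<^sub>m k $$ (i,j)" using HH[of "unit_vec k j"] i j by simp
    finally show "(H * H) $$ (i,j) = 1\<^sub>m k $$ (i,j)" .
  qed (insert H, auto)
  have Hu: "H *\<^sub>v u = unit_vec k 0"
  proof (cases "w \<bullet> w = 0")
    case True
    then have "w = 0\<^sub>v k" by (rule w0)
    have "u = unit_vec k 0"
    proof (rule eq_vecI)
      fix i assume "i < dim_vec (unit_vec k 0)"
      then have i: "i < k" by simp
      have "w $ i = 0" using \<open>w = 0\<^sub>v k\<close> i by simp
      then show "u $ i = unit_vec k 0 $ i" unfolding w_def using i u k by simp
    qed (insert u, simp)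
    have e1: "H *\<^sub>v u = u - (c * (w \<bullet> u)) \<cdot>\<^sub>v w" by (rule Hx[OF u(1)])
    have wi: "w $ i = 0" if "i < k" for i using \<open>w = 0\<^sub>v k\<close> that by simp
    have e2: "(c * (w \<bullet> u)) \<cdot>\<^sub>v w = 0\<^sub>v k"
    proof (rule eq_vecI)
      fix i assume "i < dim_vec (0\<^sub>v k :: real vec)"
      then show "((c * (w \<bullet> u)) \<cdot>\<^sub>v w) $ i = 0\<^sub>v k $ i" using wi[of i] w by simp
    qed (insert w, simp)
    have "H *\<^sub>v u = u" unfolding e1 e2 using u(1) by (rule minus_zero_vec)
    then show ?thesis using \<open>u = unit_vec k 0\<close> by metis
  next
    case False
    have e0: "unit_vec k 0 \<in> carrier_vec k" by simp
    have wi: "w $ i = u $ i - (if i = 0 then 1 else 0)" if "i < k" for i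
      unfolding w_def using u(1) that k by simp
    have wu: "w \<bullet> u = 1 - u $ 0"
    proof -
      have "w \<bullet> u = u \<bullet> u - unit_vec k 0 \<bullet> u" unfolding w_def
        by (rule minus_scalar_prod_distrib[OF u(1) e0 u(1)])
      also have "\<dots> = 1 - u $ 0" using u k by simp
      finally show ?thesis .
    qed
    have we: "w \<bullet> unit_vec k 0 = u $ 0 - 1" using wi[of 0] k by simp
    have "w \<bullet> w = w \<bullet> u - w \<bullet> unit_vec k 0"
      using scalar_prod_minus_distrib[OF w u(1) e0] unfolding w_def[symmetric] .
    then have "w \<bullet> w = 2 - 2 * u $ 0" using wu we by simp
    then have cwu: "c * (w \<bullet> u) = 1" using False wu unfolding c_def by (simp add: field_simps)
    show ?thesis
    proof (rule eq_vecI)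
      fix i assume "i < dim_vec (unit_vec k 0)"
      then have i: "i < k" by simp
      have "(H *\<^sub>v u) $ i = u $ i - (c * (w \<bullet> u)) * w $ i" unfolding Hx[OF u(1)] using i u w by simp
      also have "\<dots> = unit_vec k 0 $ i" unfolding cwu wi[OF i] using i k by simp
      finally show "(H *\<^sub>v u) $ i = unit_vec k 0 $ i" .
    qed (insert H, simp)
  qed
  show ?thesis using H HT HH1 Hu by blast
qed

lemma pos_defD:
  assumes "pos_def k P"
  shows "P \<in> carrier_mat k k" "P\<^sup>T = P"
    "\<And>x. x \<in> carrier_vec k \<Longrightarrow> x \<noteq> 0\<^sub>v k \<Longrightarrow> x \<bullet> (P *\<^sub>v x) > 0"
  using assms unfolding pos_def_def by auto

lemma pos_def_congr:
  assumes P: "pos_def k P" and H: "H \<in> carrier_mat k k" "H\<^sup>T = H" "H * H = 1\<^sub>m k"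
  shows "pos_def k (H * P * H)"
proof -
  note Pc = pos_defD(1)[OF P]
  have c: "H * P * H \<in> carrier_mat k k" using H Pc by simp
  have t: "(H * P * H)\<^sup>T = H * P * H"
  proof -
    have "(H * P * H)\<^sup>T = H\<^sup>T * (H * P)\<^sup>T"
      by (rule transpose_mult, insert H Pc, auto)
    also have "(H * P)\<^sup>T = P\<^sup>T * H\<^sup>T" by (rule transpose_mult, insert H Pc, auto)
    finally show ?thesis using H Pc pos_defD(2)[OF P] by simp
  qed
  have pd: "x \<bullet> ((H * P * H) *\<^sub>v x) > 0" if x: "x \<in> carrier_vec k" "x \<noteq> 0\<^sub>v k" for x
  proof -
    define y where "y = H *\<^sub>v x"
    have y: "y \<in> carrier_vec k" unfolding y_def using H x by simp
    have "H *\<^sub>v y = x" unfolding y_def using H x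
      by (metis assoc_mult_mat_vec one_mult_mat_vec)
    then have y0: "y \<noteq> 0\<^sub>v k" using x H by auto
    have "(H * P * H) *\<^sub>v x = (H * P) *\<^sub>v y"
      unfolding y_def by (rule assoc_mult_mat_vec, insert H Pc x, auto)
    also have "\<dots> = H *\<^sub>v (P *\<^sub>v y)" by (rule assoc_mult_mat_vec, insert H Pc y, auto)
    finally have "x \<bullet> ((H * P * H) *\<^sub>v x) = x \<bullet> (H *\<^sub>v (P *\<^sub>v y))" by simp
    also have "\<dots> = (H\<^sup>T *\<^sub>v x) \<bullet> (P *\<^sub>v y)"
      using transpose_vec_mult_scalar[of H k k "P *\<^sub>v y" x] H Pc y x by simp
    also have "\<dots> = y \<bullet> (P *\<^sub>v y)" unfolding y_def H(2) ..
    finally show ?thesis using pos_defD(3)[OF P y y0] by simp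
  qed
  show ?thesis unfolding pos_def_def using c t pd by auto
qed

lemma pos_def_block:
  assumes A: "pos_def n1 A" and B: "pos_def n2 B"
  shows "pos_def (n1 + n2) (four_block_mat A (0\<^sub>m n1 n2) (0\<^sub>m n2 n1) B)"
proof -
  note Ac = pos_defD(1)[OF A] and Bc = pos_defD(1)[OF B]
  let ?M = "four_block_mat A (0\<^sub>m n1 n2) (0\<^sub>m n2 n1) B"
  have c: "?M \<in> carrier_mat (n1 + n2) (n1 + n2)" using Ac Bc by simp
  have t: "?M\<^sup>T = ?M"
    unfolding transpose_four_block_mat[OF Ac zero_carrier_mat zero_carrier_mat Bc]
    using pos_defD(2)[OF A] pos_defD(2)[OF B] by simp
  have pd: "x \<bullet> (?M *\<^sub>v x) > 0" if x: "x \<in> carrier_vec (n1 + n2)" "x \<noteq> 0\<^sub>v (n1 + n2)" for x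
  proof -
    define a where "a = vec_first x n1"
    define b where "b = vec_last x n2"
    have a: "a \<in> carrier_vec n1" and b: "b \<in> carrier_vec n2" unfolding a_def b_def by auto
    have xab: "x = a @\<^sub>v b" unfolding a_def b_def using x by simp
    have "?M *\<^sub>v x = (A *\<^sub>v a + 0\<^sub>m n1 n2 *\<^sub>v b) @\<^sub>v (0\<^sub>m n2 n1 *\<^sub>v a + B *\<^sub>v b)"
      unfolding xab by (rule four_block_mat_mult_vec[OF Ac _ _ Bc a b], auto)
    also have "\<dots> = (A *\<^sub>v a) @\<^sub>v (B *\<^sub>v b)"
    proof -
      have z1: "0\<^sub>m n1 n2 *\<^sub>v b = 0\<^sub>v n1" using b by (intro eq_vecI, auto)
      have z2: "0\<^sub>m n2 n1 *\<^sub>v a = 0\<^sub>v n2" using a by (intro eq_vecI, auto)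
      show ?thesis unfolding z1 z2 using a b Ac Bc by simp
    qed
    finally have "x \<bullet> (?M *\<^sub>v x) = a \<bullet> (A *\<^sub>v a) + b \<bullet> (B *\<^sub>v b)"
      unfolding xab using a b Ac Bc by (simp add: scalar_prod_append[of _ n1 _ n2])
    moreover have "a \<bullet> (A *\<^sub>v a) \<ge> 0"
      using pos_defD(3)[OF A a] a Ac by (cases "a = 0\<^sub>v n1", auto simp: less_imp_le)
    moreover have "b \<bullet> (B *\<^sub>v b) \<ge> 0"
      using pos_defD(3)[OF B b] b Bc by (cases "b = 0\<^sub>v n2", auto simp: less_imp_le)
    moreover have "a \<noteq> 0\<^sub>v n1 \<or> b \<noteq> 0\<^sub>v n2" using x xab by auto
    ultimately show ?thesis using pos_defD(3)[OF A a] pos_defD(3)[OF B b] by fastforce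
  qed
  show ?thesis unfolding pos_def_def using c t pd by auto
qed

lemma vv_pos: fixes v :: "real vec"
  assumes v: "v \<in> carrier_vec k" "v \<noteq> 0\<^sub>v k" shows "v \<bullet> v > 0"
proof -
  obtain i where i: "i < k" "v $ i \<noteq> 0" using v by (metis carrier_vecD eq_vecI index_zero_vec)
  have "v \<bullet> v = (\<Sum>j\<in>{0..<k}. v$j * v$j)" using v by (simp add: scalar_prod_def)
  moreover have "v$i * v$i \<le> (\<Sum>j\<in>{0..<k}. v$j * v$j)"
    by (rule member_le_sum, insert i, auto)
  moreover have "v$i * v$i > 0" using i by (metis not_real_square_gt_zero)
  ultimately show ?thesis by linarith
qed

lemma pos_def_1: assumes "(a::real) > 0" shows "pos_def 1 (mat 1 1 (\<lambda>_. a))"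
proof -
  have "x \<bullet> (mat 1 1 (\<lambda>_. a) *\<^sub>v x) > 0" if x: "x \<in> carrier_vec 1" "x \<noteq> 0\<^sub>v 1" for x
  proof -
    have "x $ 0 \<noteq> 0" using x by (metis One_nat_def carrier_vecD eq_vecI index_zero_vec less_one)
    moreover have "x \<bullet> (mat 1 1 (\<lambda>_. a) *\<^sub>v x) = a * (x$0 * x$0)"
      using x by (simp add: scalar_prod_def row_def)
    ultimately show ?thesis using assms by (metis mult_pos_pos not_real_square_gt_zero)
  qed
  then show ?thesis unfolding pos_def_def by (auto intro!: eq_matI)
qed

lemma sandwich:
  fixes H X Y :: "real mat"
  assumes H: "H \<in> carrier_mat n n" "H * H = 1\<^sub>m n" and X: "X \<in> carrier_mat n n" and Y: "Y \<in> carrier_mat n n"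
  shows "(H * X * H) * (H * Y * H) = H * (X * Y) * H"
proof -
  have "(H * X * H) * (H * Y * H) = (H * X) * (H * (H * Y * H))"
    by (rule assoc_mult_mat, insert H X Y, auto)
  also have "H * (H * Y * H) = (H * H) * (Y * H)"
  proof -
    have "H * Y * H = H * (Y * H)" by (rule assoc_mult_mat, insert H X Y, auto)
    then have "H * (H * Y * H) = H * (H * (Y * H))" by simp
    also have "\<dots> = (H * H) * (Y * H)" by (rule assoc_mult_mat[symmetric], insert H X Y, auto)
    finally show ?thesis .
  qed
  also have "(H * H) * (Y * H) = Y * H" using H Y by simp
  also have "(H * X) * (Y * H) = H * (X * (Y * H))" by (rule assoc_mult_mat, insert H X Y, auto)
  also have "X * (Y * H) = (X * Y) * H" by (rule assoc_mult_mat[symmetric], insert H X Y, auto)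
  also have "H * ((X * Y) * H) = H * (X * Y) * H" by (rule assoc_mult_mat[symmetric], insert H X Y, auto)
  finally show ?thesis .
qed

lemma sandwich2:
  fixes H X :: "real mat"
  assumes H: "H \<in> carrier_mat n n" "H * H = 1\<^sub>m n" and X: "X \<in> carrier_mat n n"
  shows "H * (H * X * H) * H = X"
proof -
  have "H * (H * X * H) * H = (H * H) * X * (H * H)"
  proof -
    have "H * (H * X * H) = (H * (H * X)) * H" by (rule assoc_mult_mat[symmetric], insert H X, auto)
    also have "H * (H * X) = (H * H) * X" by (rule assoc_mult_mat[symmetric], insert H X, auto)
    finally have "H * (H * X * H) * H = ((H * H) * X * H) * H" by simp
    also have "\<dots> = (H * H) * X * (H * H)" by (rule assoc_mult_mat, insert H X, auto)
    finally show ?thesis .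
  qed
  then show ?thesis using H X by simp
qed

lemma sqrt_exists: "pos_def k Q \<Longrightarrow> \<exists>S. pos_def k S \<and> S * S = Q"
proof (induction k arbitrary: Q)
  case 0
  have "Q * Q = Q" using pos_defD(1)[OF 0] by (intro eq_matI, auto)
  then show ?case using 0 by blast
next
  case (Suc k)
  let ?n = "Suc k"
  note Qc = pos_defD(1)[OF Suc.prems] and QT = pos_defD(2)[OF Suc.prems]
  obtain e v where v: "v \<in> carrier_vec ?n" "v \<noteq> 0\<^sub>v ?n" "Q *\<^sub>v v = e \<cdot>\<^sub>v v"
    using sym_real_eigen[OF Qc QT] by auto
  define c where "c = 1 / sqrt (v \<bullet> v)"
  define u where "u = c \<cdot>\<^sub>v v"
  have vv: "v \<bullet> v > 0" by (rule vv_pos[OF v(1,2)])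
  have uc: "u \<in> carrier_vec ?n" unfolding u_def using v by simp
  have uu: "u \<bullet> u = 1" unfolding u_def c_def using v vv
    by (simp add: power2_eq_square[symmetric])
  have u0: "u \<noteq> 0\<^sub>v ?n" using uu uc by auto
  have Qu: "Q *\<^sub>v u = e \<cdot>\<^sub>v u" unfolding u_def
    using mult_mat_vec[OF Qc v(1), of c] v(3) v(1)
    by (simp add: smult_smult_assoc mult.commute)
  have "u \<bullet> (Q *\<^sub>v u) = e" unfolding Qu using uc uu by simp
  then have e: "e > 0" using pos_defD(3)[OF Suc.prems uc u0] by simp
  obtain H where H: "H \<in> carrier_mat ?n ?n" "H\<^sup>T = H" "H * H = 1\<^sub>m ?n"
    and Hu: "H *\<^sub>v u = unit_vec ?n 0"
    using householder[OF uc uu] by auto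
  define A' where "A' = H * Q * H"
  have A'pd: "pos_def ?n A'" unfolding A'_def by (rule pos_def_congr[OF Suc.prems H])
  note A'c = pos_defD(1)[OF A'pd] and A'T = pos_defD(2)[OF A'pd]
  have He: "H *\<^sub>v unit_vec ?n 0 = u"
  proof -
    have "H *\<^sub>v (H *\<^sub>v u) = (H * H) *\<^sub>v u" by (rule assoc_mult_mat_vec[symmetric], insert H uc, auto)
    then show ?thesis using Hu H uc by simp
  qed
  have A'e: "A' *\<^sub>v unit_vec ?n 0 = e \<cdot>\<^sub>v unit_vec ?n 0"
  proof -
    have "A' *\<^sub>v unit_vec ?n 0 = (H * Q) *\<^sub>v (H *\<^sub>v unit_vec ?n 0)"
      unfolding A'_def by (rule assoc_mult_mat_vec, insert H Qc, auto)
    also have "\<dots> = H *\<^sub>v (Q *\<^sub>v u)" unfolding He by (rule assoc_mult_mat_vec, insert H Qc uc, auto)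
    also have "\<dots> = e \<cdot>\<^sub>v (H *\<^sub>v u)" unfolding Qu by (rule mult_mat_vec[OF H(1) uc])
    finally show ?thesis unfolding Hu .
  qed
  have col0: "A' $$ (i, 0) = (if i = 0 then e else 0)" if i: "i < ?n" for i
  proof -
    have "(A' *\<^sub>v unit_vec ?n 0) $ i = A' $$ (i, 0)" using i A'c by simp
    then show ?thesis using A'e i by (cases "i = 0", auto)
  qed
  have row0: "A' $$ (0, j) = (if j = 0 then e else 0)" if j: "j < ?n" for j
  proof -
    have "A' $$ (0, j) = A'\<^sup>T $$ (j, 0)" using j A'c by simp
    then show ?thesis using A'T col0[OF j] by simp
  qed
  define Q3 where "Q3 = mat k k (\<lambda>(i,j). A' $$ (Suc i, Suc j))"
  define E where "E = mat 1 1 (\<lambda>_. e)"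
  have Q3c: "Q3 \<in> carrier_mat k k" unfolding Q3_def by simp
  have Ec: "E \<in> carrier_mat 1 1" unfolding E_def by simp
  have A'blk: "A' = four_block_mat E (0\<^sub>m 1 k) (0\<^sub>m k 1) Q3"
  proof (rule eq_matI)
    fix i j assume i: "i < dim_row (four_block_mat E (0\<^sub>m 1 k) (0\<^sub>m k 1) Q3)"
      and j: "j < dim_col (four_block_mat E (0\<^sub>m 1 k) (0\<^sub>m k 1) Q3)"
    then have i': "i < ?n" and j': "j < ?n" using Ec Q3c by auto
    show "A' $$ (i, j) = four_block_mat E (0\<^sub>m 1 k) (0\<^sub>m k 1) Q3 $$ (i, j)"
    proof (cases "i = 0")
      case True
      then show ?thesis using row0[OF j'] i' j' Ec Q3c by (auto simp: E_def)
    next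
      case False
      then obtain i0 where i0: "i = Suc i0" by (cases i, auto)
      show ?thesis
      proof (cases "j = 0")
        case True
        then show ?thesis using col0[OF i'] i' j' Ec Q3c False by (auto simp: E_def)
      next
        case False
        then obtain j0 where j0: "j = Suc j0" by (cases j, auto)
        show ?thesis using i' j' Ec Q3c unfolding i0 j0 by (simp add: Q3_def)
      qed
    qed
  qed (insert A'c Ec Q3c, auto)
  have Q3pd: "pos_def k Q3"
  proof -
    have t: "Q3\<^sup>T = Q3"
    proof (rule eq_matI)
      fix i j assume "i < dim_row Q3" "j < dim_col Q3"
      then have i: "i < k" "j < k" using Q3c by auto
      have "A' $$ (Suc j, Suc i) = A'\<^sup>T $$ (Suc i, Suc j)" using i A'c by simp
      then show "Q3\<^sup>T $$ (i, j) = Q3 $$ (i, j)" using i A'T unfolding Q3_def by simp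
    qed (insert Q3c, auto)
    have pd: "y \<bullet> (Q3 *\<^sub>v y) > 0" if y: "y \<in> carrier_vec k" "y \<noteq> 0\<^sub>v k" for y
    proof -
      define x where "x = 0\<^sub>v 1 @\<^sub>v y"
      have "dim_vec x = ?n" unfolding x_def using y(1) by simp
      then have xc: "x \<in> carrier_vec ?n" by (rule carrier_vecI)
      have xi: "x $ Suc i = y $ i" if "i < k" for i unfolding x_def using that y by simp
      have x0: "x \<noteq> 0\<^sub>v ?n"
      proof
        assume x0: "x = 0\<^sub>v ?n"
        have "y = 0\<^sub>v k"
        proof (rule eq_vecI)
          fix i assume "i < dim_vec (0\<^sub>v k :: real vec)"
          then have i: "i < k" by simp
          have "x $ Suc i = 0" unfolding x0 using i by simp
          then show "y $ i = 0\<^sub>v k $ i" using xi[OF i] i by simp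
        qed (insert y, simp)
        then show False using y by simp
      qed
      have z1: "0\<^sub>m 1 k *\<^sub>v y = 0\<^sub>v 1" using y by (intro eq_vecI, auto)
      have z2: "E *\<^sub>v 0\<^sub>v 1 = 0\<^sub>v 1" using Ec by (intro eq_vecI, auto simp: scalar_prod_def)
      have z3: "0\<^sub>m k 1 *\<^sub>v 0\<^sub>v 1 = 0\<^sub>v k" by (intro eq_vecI, auto)
      have "A' *\<^sub>v x = (E *\<^sub>v 0\<^sub>v 1 + 0\<^sub>m 1 k *\<^sub>v y) @\<^sub>v (0\<^sub>m k 1 *\<^sub>v 0\<^sub>v 1 + Q3 *\<^sub>v y)"
        unfolding A'blk x_def by (rule four_block_mat_mult_vec[OF Ec _ _ Q3c _ y(1)], auto)
      also have "\<dots> = 0\<^sub>v 1 @\<^sub>v (Q3 *\<^sub>v y)" unfolding z1 z2 z3 using Q3c y by simp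
      finally have "x \<bullet> (A' *\<^sub>v x) = 0\<^sub>v 1 \<bullet> 0\<^sub>v 1 + y \<bullet> (Q3 *\<^sub>v y)"
        unfolding x_def using y Q3c by (simp add: scalar_prod_append[of _ 1 _ k])
      then have "x \<bullet> (A' *\<^sub>v x) = y \<bullet> (Q3 *\<^sub>v y)" by simp
      then show ?thesis using pos_defD(3)[OF A'pd xc x0] by simp
    qed
    show ?thesis unfolding pos_def_def using Q3c t pd by auto
  qed
  obtain S3 where S3: "pos_def k S3" "S3 * S3 = Q3" using Suc.IH[OF Q3pd] by auto
  note S3c = pos_defD(1)[OF S3(1)]
  define F where "F = mat 1 1 (\<lambda>_. sqrt e)"
  have Fc: "F \<in> carrier_mat 1 1" unfolding F_def by simp
  define S' where "S' = four_block_mat F (0\<^sub>m 1 k) (0\<^sub>m k 1) S3"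
  have S'pd: "pos_def ?n S'" unfolding S'_def F_def
    using pos_def_block[OF pos_def_1 S3(1), of "sqrt e"] e by simp
  note S'c = pos_defD(1)[OF S'pd]
  have FF: "F * F = E" unfolding F_def E_def using e
    by (intro eq_matI, auto simp: scalar_prod_def row_def col_def)
  have S'S': "S' * S' = A'"
  proof -
    have "S' * S' = four_block_mat (F * F + 0\<^sub>m 1 k * 0\<^sub>m k 1) (F * 0\<^sub>m 1 k + 0\<^sub>m 1 k * S3)
       (0\<^sub>m k 1 * F + S3 * 0\<^sub>m k 1) (0\<^sub>m k 1 * 0\<^sub>m 1 k + S3 * S3)"
      unfolding S'_def by (rule mult_four_block_mat, insert Fc S3c, auto)
    also have "\<dots> = four_block_mat E (0\<^sub>m 1 k) (0\<^sub>m k 1) Q3"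
      using Fc S3c Ec Q3c unfolding FF S3(2) by simp
    finally show ?thesis using A'blk by simp
  qed
  define S where "S = H * S' * H"
  have Spd: "pos_def ?n S" unfolding S_def by (rule pos_def_congr[OF S'pd H])
  have HHX: "H * (H * X) = X" if "X \<in> carrier_mat ?n m" for X m
  proof -
    have "H * (H * X) = (H * H) * X" by (rule assoc_mult_mat[symmetric], insert H that, auto)
    then show ?thesis using H that by simp
  qed
  have "S * S = H * (S' * S') * H"
    unfolding S_def by (rule sandwich[OF H(1) H(3) S'c S'c])
  also have "\<dots> = H * A' * H" unfolding S'S' ..
  also have "\<dots> = Q" unfolding A'_def by (rule sandwich2[OF H(1) H(3) Qc])
  finally show ?case using Spd by blast
qed

definition trk :: "nat \<Rightarrow> real mat \<Rightarrow> real" where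
  "trk k X = (\<Sum>i<k. X $$ (i,i))"

lemma trk_comm: assumes A: "A \<in> carrier_mat k m" and B: "B \<in> carrier_mat m k"
  shows "trk k (A * B) = trk m (B * A)"
proof -
  have "trk k (A * B) = (\<Sum>i<k. \<Sum>j<m. A $$ (i,j) * B $$ (j,i))"
    unfolding trk_def using A B
    by (intro sum.cong, auto simp: scalar_prod_def lessThan_atLeast0 intro!: sum.cong)
  also have "\<dots> = (\<Sum>j<m. \<Sum>i<k. B $$ (j,i) * A $$ (i,j))"
    by (subst sum.swap, simp add: mult.commute)
  also have "\<dots> = trk m (B * A)"
    unfolding trk_def using A B
    by (intro sum.cong, auto simp: scalar_prod_def lessThan_atLeast0 intro!: sum.cong)
  finally show ?thesis .
qed

lemma trk_add: assumes "A \<in> carrier_mat k k" "B \<in> carrier_mat k k"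
  shows "trk k (A + B) = trk k A + trk k B"
  unfolding trk_def using assms by (simp add: sum.distrib)

lemma trk_quad: assumes D: "D \<in> carrier_mat k k" "D\<^sup>T = D" and R: "pos_def k R"
  shows "trk k (D * (R * D)) = (\<Sum>i<k. col D i \<bullet> (R *\<^sub>v col D i))"
    "\<And>i. i < k \<Longrightarrow> col D i \<bullet> (R *\<^sub>v col D i) \<ge> 0"
    "trk k (D * (R * D)) = 0 \<Longrightarrow> D = 0\<^sub>m k k"
proof -
  note Rc = pos_defD(1)[OF R]
  have ent: "(D * (R * D)) $$ (i,i) = col D i \<bullet> (R *\<^sub>v col D i)" if i: "i < k" for i
  proof -
    have r: "row D i = col D i" using D i by (metis carrier_matD col_transpose)
    have c: "col (R * D) i = R *\<^sub>v col D i" using Rc D i by (intro eq_vecI, auto)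
    have "(D * (R * D)) $$ (i,i) = row D i \<bullet> col (R * D) i" using D Rc i by simp
    then show ?thesis unfolding r c .
  qed
  show tr: "trk k (D * (R * D)) = (\<Sum>i<k. col D i \<bullet> (R *\<^sub>v col D i))"
    unfolding trk_def using ent by simp
  have nn: "col D i \<bullet> (R *\<^sub>v col D i) \<ge> 0" if i: "i < k" for i
  proof (cases "col D i = 0\<^sub>v k")
    case True then show ?thesis using Rc by simp
  next
    case False
    have "col D i \<in> carrier_vec k" using D col_dim[of D i] by simp
    with False show ?thesis using pos_defD(3)[OF R, of "col D i"] by (simp add: less_imp_le)
  qed
  show "\<And>i. i < k \<Longrightarrow> col D i \<bullet> (R *\<^sub>v col D i) \<ge> 0" by (rule nn)
  assume "trk k (D * (R * D)) = 0"
  then have "(\<Sum>i<k. col D i \<bullet> (R *\<^sub>v col D i)) = 0" using tr by simp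
  then have z: "\<forall>i\<in>{..<k}. col D i \<bullet> (R *\<^sub>v col D i) = 0"
    using nn by (subst sum_nonneg_eq_0_iff[symmetric], auto)
  have cz: "col D j = 0\<^sub>v k" if j: "j < k" for j
  proof (rule ccontr)
    assume "col D j \<noteq> 0\<^sub>v k"
    moreover have "col D j \<in> carrier_vec k" using D col_dim[of D j] by simp
    ultimately have "col D j \<bullet> (R *\<^sub>v col D j) > 0" using pos_defD(3)[OF R, of "col D j"] by simp
    then show False using z j by simp
  qed
  show "D = 0\<^sub>m k k"
  proof (rule eq_matI)
    fix i j assume "i < dim_row (0\<^sub>m k k :: real mat)" "j < dim_col (0\<^sub>m k k :: real mat)"
    then have ij: "i < k" "j < k" by auto
    have "col D j $ i = 0" using cz[OF ij(2)] ij by simp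
    then show "D $$ (i, j) = 0\<^sub>m k k $$ (i, j)" using ij D by simp
  qed (insert D, auto)
qed

lemma sqrt_unique:
  assumes R1: "pos_def k R1" and R2: "pos_def k R2" and eq: "R1 * R1 = R2 * R2"
  shows "R1 = R2"
proof -
  note R1c = pos_defD(1)[OF R1] and R2c = pos_defD(1)[OF R2]
  define D where "D = R1 - R2"
  have Dc: "D \<in> carrier_mat k k" unfolding D_def using R2c by (rule minus_carrier_mat)
  have DT: "D\<^sup>T = D" unfolding D_def
    using transpose_minus[OF R1c R2c] pos_defD(2)[OF R1] pos_defD(2)[OF R2] by simp
  have key: "R1 * D + D * R2 = 0\<^sub>m k k"
  proof -
    have "R1 * D = R1 * R1 - R1 * R2" unfolding D_def by (rule mult_minus_distrib_mat[OF R1c R1c R2c])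
    moreover have "D * R2 = R1 * R2 - R2 * R2" unfolding D_def by (rule minus_mult_distrib_mat[OF R1c R2c R2c])
    ultimately show ?thesis using eq R1c R2c by (intro eq_matI, auto)
  qed
  have "D * (R1 * D + D * R2) = D * (R1 * D) + D * (D * R2)"
    by (rule mult_add_distrib_mat, insert Dc R1c R2c, auto)
  note distr = this
  have z: "D * (R1 * D + D * R2) = 0\<^sub>m k k" unfolding key using Dc by simp
  have "trk k (D * (R1 * D)) + trk k (D * (D * R2)) = trk k (D * (R1 * D) + D * (D * R2))"
    by (rule trk_add[symmetric], insert Dc R1c R2c, auto)
  also have "\<dots> = trk k (0\<^sub>m k k)" unfolding distr[symmetric] z ..
  also have "\<dots> = 0" by (simp add: trk_def)
  finally have "trk k (D * (R1 * D)) + trk k (D * (D * R2)) = 0" .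
  moreover have "trk k (D * (D * R2)) = trk k (D * (R2 * D))"
  proof -
    have "D * (D * R2) = (D * D) * R2" by (rule assoc_mult_mat[symmetric], insert Dc R2c, auto)
    then have "trk k (D * (D * R2)) = trk k (R2 * (D * D))" using trk_comm[of "D * D" k k R2] Dc R2c by simp
    also have "R2 * (D * D) = (R2 * D) * D" by (rule assoc_mult_mat[symmetric], insert Dc R2c, auto)
    also have "trk k ((R2 * D) * D) = trk k (D * (R2 * D))" using trk_comm[of "R2 * D" k k D] Dc R2c by simp
    finally show ?thesis .
  qed
  moreover have "trk k (D * (R1 * D)) \<ge> 0" "trk k (D * (R2 * D)) \<ge> 0"
    using trk_quad(1,2)[OF Dc DT R1] trk_quad(1,2)[OF Dc DT R2] by (auto intro: sum_nonneg)
  ultimately have "trk k (D * (R1 * D)) = 0" by linarith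
  then have "D = 0\<^sub>m k k" by (rule trk_quad(3)[OF Dc DT R1])
  note D0 = this
  show ?thesis
  proof (rule eq_matI)
    fix i j assume "i < dim_row R2" "j < dim_col R2"
    then have ij: "i < k" "j < k" using R2c by auto
    have "D $$ (i,j) = 0" unfolding D0 using ij by simp
    then show "R1 $$ (i, j) = R2 $$ (i, j)" unfolding D_def using ij R1c R2c by simp
  qed (insert R1c R2c, auto)
qed

lemma minv_props:
  fixes X :: "real mat"
  assumes X: "X \<in> carrier_mat k k"
    and inj: "\<And>v. v \<in> carrier_vec k \<Longrightarrow> X *\<^sub>v v = 0\<^sub>v k \<Longrightarrow> v = 0\<^sub>v k"
  shows "minv X \<in> carrier_mat k k" "X * minv X = 1\<^sub>m k" "minv X * X = 1\<^sub>m k"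
    "mat_inverse X = Some (minv X)"
proof -
  have "det X \<noteq> 0" using det_0_iff_vec_prod_zero_field[OF X] inj by blast
  then have U: "X \<in> Units (ring_mat TYPE(real) k ())" by (rule det_non_zero_imp_unit[OF X])
  have "mat_inverse X \<noteq> None"
  proof
    assume "mat_inverse X = None"
    from mat_inverse(1)[OF X this] have "X \<notin> Units (ring_mat TYPE(real) k ())" .
    with U show False by contradiction
  qed
  then obtain B where B: "mat_inverse X = Some B" by auto
  have m: "minv X = B" unfolding minv_def B by simp
  show "minv X \<in> carrier_mat k k" "X * minv X = 1\<^sub>m k" "minv X * X = 1\<^sub>m k"
    "mat_inverse X = Some (minv X)"
    using mat_inverse(2)[OF X B] B unfolding m by auto
qed

lemma pos_def_inj:
  assumes P: "pos_def k P" and v: "v \<in> carrier_vec k" "P *\<^sub>v v = 0\<^sub>v k"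
  shows "v = 0\<^sub>v k"
proof (rule ccontr)
  assume "v \<noteq> 0\<^sub>v k"
  then have "v \<bullet> (P *\<^sub>v v) > 0" using pos_defD(3)[OF P v(1)] by simp
  then show False using v by simp
qed

lemma inv_sym:
  fixes X Y :: "real mat"
  assumes X: "X \<in> carrier_mat k k" and Y: "Y \<in> carrier_mat k k"
    and XY: "X * Y = 1\<^sub>m k" and YX: "Y * X = 1\<^sub>m k" and XT: "X\<^sup>T = X"
  shows "Y\<^sup>T = Y"
proof -
  have "(X * Y)\<^sup>T = Y\<^sup>T * X\<^sup>T" by (rule transpose_mult[OF X Y])
  then have YTX: "Y\<^sup>T * X = 1\<^sub>m k" using XY XT by simp
  have "Y\<^sup>T = Y\<^sup>T * (X * Y)" using XY Y by simp
  also have "\<dots> = (Y\<^sup>T * X) * Y" by (rule assoc_mult_mat[symmetric], insert X Y, auto)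
  also have "\<dots> = Y" using YTX Y by simp
  finally show ?thesis .
qed

lemma pos_def_minv:
  assumes P: "pos_def k P"
  shows "pos_def k (minv P)" "P * minv P = 1\<^sub>m k" "minv P * P = 1\<^sub>m k" "minv P \<in> carrier_mat k k"
    "mat_inverse P = Some (minv P)"
proof -
  note Pc = pos_defD(1)[OF P]
  note mp = minv_props[OF Pc pos_def_inj[OF P]]
  show "P * minv P = 1\<^sub>m k" "minv P * P = 1\<^sub>m k" "minv P \<in> carrier_mat k k"
    "mat_inverse P = Some (minv P)" using mp by auto
  let ?Q = "minv P"
  have QT: "?Q\<^sup>T = ?Q" by (rule inv_sym[OF Pc mp(1) mp(2) mp(3) pos_defD(2)[OF P]])
  have pd: "x \<bullet> (?Q *\<^sub>v x) > 0" if x: "x \<in> carrier_vec k" "x \<noteq> 0\<^sub>v k" for x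
  proof -
    define y where "y = ?Q *\<^sub>v x"
    have y: "y \<in> carrier_vec k" unfolding y_def using mp x by simp
    have Py: "P *\<^sub>v y = x" unfolding y_def
    proof -
      have "P *\<^sub>v (?Q *\<^sub>v x) = (P * ?Q) *\<^sub>v x" by (rule assoc_mult_mat_vec[symmetric], insert Pc mp x, auto)
      then show "P *\<^sub>v (?Q *\<^sub>v x) = x" using mp x by simp
    qed
    have y0: "y \<noteq> 0\<^sub>v k" using Py x Pc by auto
    have "x \<bullet> (?Q *\<^sub>v x) = (P *\<^sub>v y) \<bullet> y" unfolding y_def[symmetric] Py ..
    also have "\<dots> = y \<bullet> (P *\<^sub>v y)" by (rule comm_scalar_prod[of _ k], insert Pc y, auto)
    finally show ?thesis using pos_defD(3)[OF P y y0] by simp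
  qed
  show "pos_def k (minv P)" unfolding pos_def_def using mp QT pd by auto
qed

lemma inv_sqrt_props:
  assumes P: "pos_def k P"
  shows "pos_def k (inv_sqrt P)" "inv_sqrt P * inv_sqrt P = minv P"
proof -
  have dr: "dim_row P = k" using pos_defD(1)[OF P] by simp
  have ex: "\<exists>!R. pos_def k R \<and> R * R = minv P"
  proof -
    obtain R where R: "pos_def k R" "R * R = minv P" using sqrt_exists[OF pos_def_minv(1)[OF P]] by auto
    show ?thesis
    proof (rule ex1I[of _ R])
      show "pos_def k R \<and> R * R = minv P" using R by simp
      fix R' assume "pos_def k R' \<and> R' * R' = minv P"
      then show "R' = R" using sqrt_unique[of k R' R] R by simp
    qed
  qed
  have "pos_def k (inv_sqrt P) \<and> inv_sqrt P * inv_sqrt P = minv P"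
    unfolding inv_sqrt_def dr by (rule theI'[OF ex])
  then show "pos_def k (inv_sqrt P)" "inv_sqrt P * inv_sqrt P = minv P" by auto
qed

lemma rank_inj:
  fixes A :: "real mat"
  assumes A: "A \<in> carrier_mat m nc" and rk: "vec_space.rank m A = nc"
    and x: "x \<in> carrier_vec nc" "A *\<^sub>v x = 0\<^sub>v m"
  shows "x = 0\<^sub>v nc"
proof (rule ccontr)
  assume x0: "x \<noteq> 0\<^sub>v nc"
  interpret V: vec_space "TYPE(real)" m .
  show False
  proof (cases "distinct (cols A)")
    case True
    have "V.lin_indpt (set (cols A))" by (rule V.full_rank_lin_indpt[OF A rk True])
    moreover have "V.lin_dep (set (cols A))" by (rule V.lin_depI[OF A x(1) x0 x(2) True])
    ultimately show False by simp
  next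
    case False
    obtain S where S: "maximal S (\<lambda>T. T \<subseteq> set (cols A) \<and> V.lin_indpt T)"
      using maximal_exists[of "(\<lambda>T. T \<subseteq> set (cols A) \<and> V.lin_indpt T)" "card (set (cols A))" "{}"]
      by (meson List.finite_set card_mono empty_iff empty_subsetI V.finite_lin_indpt2 rev_finite_subset)
    then have "card S \<le> card (set (cols A))" by (simp add: card_mono maximal_def)
    moreover have "card (set (cols A)) < length (cols A)"
      using False card_distinct card_length le_neq_implies_less by blast
    moreover have "length (cols A) = nc" using A by simp
    moreover have "V.rank A = card S" by (rule V.rank_card_indpt[OF A S])
    ultimately show False using rk by simp
  qed
qed

lemma massoc: assumes "dim_col A = dim_row B" "dim_col B = dim_row C"
  shows "(A * B) * C = A * (B * (C :: real mat))"
proof -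
  have a: "A \<in> carrier_mat (dim_row A) (dim_col A)" unfolding carrier_mat_def by simp
  have b: "B \<in> carrier_mat (dim_col A) (dim_col B)" unfolding carrier_mat_def using assms(1) by simp
  have c: "C \<in> carrier_mat (dim_col B) (dim_col C)" unfolding carrier_mat_def using assms(2) by simp
  show ?thesis by (rule assoc_mult_mat[OF a b c])
qed

lemma quad_form: fixes A :: "real mat"
  assumes A: "A \<in> carrier_mat m k" and x: "x \<in> carrier_vec k"
  shows "x \<bullet> ((A\<^sup>T * A) *\<^sub>v x) = (A *\<^sub>v x) \<bullet> (A *\<^sub>v x)"
proof -
  have "(A\<^sup>T * A) *\<^sub>v x = A\<^sup>T *\<^sub>v (A *\<^sub>v x)" by (rule assoc_mult_mat_vec, insert A x, auto)
  then have "x \<bullet> ((A\<^sup>T * A) *\<^sub>v x) = (A\<^sup>T *\<^sub>v (A *\<^sub>v x)) \<bullet> x"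
    using A x by (simp add: comm_scalar_prod[of x k])
  also have "\<dots> = (A *\<^sub>v x) \<bullet> (A *\<^sub>v x)" by (rule transpose_vec_mult_scalar, insert A x, auto)
  finally show ?thesis .
qed

lemma lin3: fixes L A B C Rr :: "real mat"
  assumes L: "L \<in> carrier_mat a m" and A: "A \<in> carrier_mat m m" and B: "B \<in> carrier_mat m m"
   and C: "C \<in> carrier_mat m m" and Rr: "Rr \<in> carrier_mat m b"
  shows "L * (A + B - C) * Rr = L * A * Rr + L * B * Rr - L * C * Rr"
proof -
  have "L * (A + B - C) = L * (A + B) - L * C" by (rule mult_minus_distrib_mat, insert L A B C, auto)
  also have "L * (A + B) = L * A + L * B" by (rule mult_add_distrib_mat, insert L A B C, auto)
  finally have "L * (A + B - C) * Rr = (L * A + L * B - L * C) * Rr" by simp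
  also have "\<dots> = (L * A + L * B) * Rr - L * C * Rr" by (rule minus_mult_distrib_mat, insert L A B C Rr, auto)
  also have "(L * A + L * B) * Rr = L * A * Rr + L * B * Rr" by (rule add_mult_distrib_mat, insert L A B C Rr, auto)
  finally show ?thesis .
qed

lemma add_sub_cancel_mat: fixes A B :: "real mat"
  assumes "A \<in> carrier_mat a b" "B \<in> carrier_mat a b"
  shows "A + B - B = A"
proof (rule eq_matI)
  fix i j assume "i < dim_row A" "j < dim_col A"
  then show "(A + B - B) $$ (i, j) = A $$ (i, j)" using assms by simp
qed (insert assms, auto)

theorem theorem5:
  fixes n m p K :: nat and A B C D \<Sigma>v :: "real mat"
  assumes A: "A \<in> carrier_mat n n" and B: "B \<in> carrier_mat n m"
    and C: "C \<in> carrier_mat p n" and D: "D \<in> carrier_mat p m"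
    and rk: "vec_space.rank (p * K) (obs_mat n p K A C) = n"
    and Sv: "pos_def n \<Sigma>v"
  defines "Ok \<equiv> obs_mat n p K A C"
  defines "Wo \<equiv> Ok\<^sup>T * Ok"
  defines "M \<equiv> Ok * minv Wo * Ok\<^sup>T"
  defines "N \<equiv> inv_sqrt \<Sigma>v * minv Wo * Ok\<^sup>T"
  defines "SX \<equiv> {X \<in> carrier_mat (p * K) (p * K). mat_inverse (Ok\<^sup>T * X * Ok) = Some \<Sigma>v}"
  defines "SXp \<equiv> {X \<in> SX. pos_def (p * K) X}"
  shows "SX \<noteq> {}
    \<and> SX = {N\<^sup>T * N + R - M * R * M | R. R \<in> carrier_mat (p * K) (p * K)}
    \<and> SXp \<noteq> {}
    \<and> (p * K = n \<longrightarrow> SXp = {N\<^sup>T * N})"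
proof -
  define q where "q = p * K"
  have Oc: "Ok \<in> carrier_mat q n" unfolding Ok_def obs_mat_def q_def by simp
  have OTc: "Ok\<^sup>T \<in> carrier_mat n q" using Oc by simp
  have Oinj: "x = 0\<^sub>v n" if "x \<in> carrier_vec n" "Ok *\<^sub>v x = 0\<^sub>v q" for x
    by (rule rank_inj[OF Oc _ that], insert rk, simp add: Ok_def q_def)
  have Wc: "Wo \<in> carrier_mat n n" unfolding Wo_def using Oc by simp
  have Winj: "x = 0\<^sub>v n" if x: "x \<in> carrier_vec n" "Wo *\<^sub>v x = 0\<^sub>v n" for x
  proof -
    have "(Ok *\<^sub>v x) \<bullet> (Ok *\<^sub>v x) = x \<bullet> (Wo *\<^sub>v x)" unfolding Wo_def using quad_form[OF Oc x(1)] by simp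
    also have "\<dots> = 0" using x by simp
    finally have z: "(Ok *\<^sub>v x) \<bullet> (Ok *\<^sub>v x) = 0" .
    have "Ok *\<^sub>v x = 0\<^sub>v q"
    proof (rule ccontr)
      assume "Ok *\<^sub>v x \<noteq> 0\<^sub>v q"
      then have "(Ok *\<^sub>v x) \<bullet> (Ok *\<^sub>v x) > 0" using vv_pos[of "Ok *\<^sub>v x" q] Oc x by simp
      then show False using z by simp
    qed
    then show ?thesis by (rule Oinj[OF x(1)])
  qed
  note Wp = minv_props[OF Wc Winj]
  define Wi where "Wi = minv Wo"
  have Wic: "Wi \<in> carrier_mat n n" and WWi: "Wo * Wi = 1\<^sub>m n" and WiW: "Wi * Wo = 1\<^sub>m n"
    using Wp unfolding Wi_def by auto
  have WT: "Wo\<^sup>T = Wo" unfolding Wo_def using transpose_mult[OF OTc Oc] by simp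
  have WiT: "Wi\<^sup>T = Wi" by (rule inv_sym[OF Wc Wic WWi WiW WT])
  define Q where "Q = minv \<Sigma>v"
  define S where "S = inv_sqrt \<Sigma>v"
  note Svc = pos_defD(1)[OF Sv]
  have Qpd: "pos_def n Q" and SvQ: "\<Sigma>v * Q = 1\<^sub>m n" and Qc: "Q \<in> carrier_mat n n"
    using pos_def_minv[OF Sv] unfolding Q_def by auto
  have Spd: "pos_def n S" and SS: "S * S = Q" using inv_sqrt_props[OF Sv] unfolding S_def Q_def by auto
  note Sc = pos_defD(1)[OF Spd] and ST = pos_defD(2)[OF Spd]
  have Nd: "N = S * Wi * Ok\<^sup>T" unfolding N_def S_def Wi_def ..
  have Md: "M = Ok * Wi * Ok\<^sup>T" unfolding M_def Wi_def ..
  have Nc: "N \<in> carrier_mat n q" unfolding Nd using Sc Wic OTc by simp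
  have Mc: "M \<in> carrier_mat q q" unfolding Md using Oc Wic by simp
  define G where "G = N\<^sup>T * N"
  have Gc: "G \<in> carrier_mat q q" unfolding G_def using Nc by simp
  have dims: "dim_row Ok = q" "dim_col Ok = n" "dim_row Wi = n" "dim_col Wi = n"
    "dim_row S = n" "dim_col S = n" "dim_row Q = n" "dim_col Q = n" "dim_row N = n" "dim_col N = q"
    "dim_row M = q" "dim_col M = q"
    using Oc Wic Sc Qc Nc Mc by auto
  have NO: "N * Ok = S"
  proof -
    have "N * Ok = S * (Wi * (Ok\<^sup>T * Ok))" unfolding Nd using dims by (simp add: massoc)
    also have "Ok\<^sup>T * Ok = Wo" unfolding Wo_def ..
    also have "Wi * Wo = 1\<^sub>m n" by (rule WiW)
    finally show ?thesis using Sc by simp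
  qed
  have OTNT: "Ok\<^sup>T * N\<^sup>T = S" using transpose_mult[OF Nc Oc] NO ST by simp
  have OGO: "Ok\<^sup>T * G * Ok = Q"
  proof -
    have "Ok\<^sup>T * G * Ok = (Ok\<^sup>T * N\<^sup>T) * (N * Ok)" unfolding G_def using dims by (simp add: massoc)
    then show ?thesis using NO OTNT SS by simp
  qed
  have OTM: "Ok\<^sup>T * M = Ok\<^sup>T"
  proof -
    have "Ok\<^sup>T * M = (Ok\<^sup>T * Ok) * (Wi * Ok\<^sup>T)" unfolding Md using dims by (simp add: massoc)
    also have "\<dots> = (Wo * Wi) * Ok\<^sup>T" unfolding Wo_def[symmetric] using dims Wc by (simp add: massoc)
    also have "\<dots> = Ok\<^sup>T" unfolding WWi using OTc by simp
    finally show ?thesis .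
  qed
  have MO: "M * Ok = Ok"
  proof -
    have "M * Ok = Ok * (Wi * (Ok\<^sup>T * Ok))" unfolding Md using dims by (simp add: massoc)
    also have "\<dots> = Ok" unfolding Wo_def[symmetric] WiW using Oc by simp
    finally show ?thesis .
  qed
  have SXiff: "X \<in> SX \<longleftrightarrow> X \<in> carrier_mat q q \<and> Ok\<^sup>T * X * Ok = Q" for X
  proof -
    have inv: "mat_inverse Y = Some \<Sigma>v \<longleftrightarrow> Y = Q" if Y: "Y \<in> carrier_mat n n" for Y
    proof
      assume "mat_inverse Y = Some \<Sigma>v"
      from mat_inverse(2)[OF Y this] have YS: "Y * \<Sigma>v = 1\<^sub>m n" by simp
      have "Y = Y * (\<Sigma>v * Q)" using SvQ Y by simp
      also have "\<dots> = (Y * \<Sigma>v) * Q" by (rule assoc_mult_mat[symmetric], insert Y Qc Svc, auto)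
      finally show "Y = Q" using YS Qc by simp
    next
      assume YQ: "Y = Q"
      note mq = pos_def_minv[OF Qpd]
      have "minv Q = \<Sigma>v * Q * minv Q" using SvQ mq by simp
      also have "\<dots> = \<Sigma>v * (Q * minv Q)" by (rule assoc_mult_mat, insert Qc mq Svc, auto)
      also have "\<dots> = \<Sigma>v" using mq Svc by simp
      finally show "mat_inverse Y = Some \<Sigma>v" using mq(5) YQ by simp
    qed
    show ?thesis
    proof
      assume "X \<in> SX"
      then have X: "X \<in> carrier_mat q q" "mat_inverse (Ok\<^sup>T * X * Ok) = Some \<Sigma>v"
        unfolding SX_def q_def by auto
      have "Ok\<^sup>T * X * Ok \<in> carrier_mat n n" using X Oc by simp
      then show "X \<in> carrier_mat q q \<and> Ok\<^sup>T * X * Ok = Q" using inv X by simp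
    next
      assume X: "X \<in> carrier_mat q q \<and> Ok\<^sup>T * X * Ok = Q"
      have "Ok\<^sup>T * X * Ok \<in> carrier_mat n n" using X Qc by simp
      then show "X \<in> SX" using inv X unfolding SX_def q_def by simp
    qed
  qed
  have Gin: "G \<in> SX" using SXiff Gc OGO by simp
  have param: "Ok\<^sup>T * (G + R - M * R * M) * Ok = Q" if R: "R \<in> carrier_mat q q" for R
  proof -
    have MRM: "M * R * M \<in> carrier_mat q q" using Mc R by simp
    have "Ok\<^sup>T * (G + R - M * R * M) * Ok = Ok\<^sup>T * G * Ok + Ok\<^sup>T * R * Ok - Ok\<^sup>T * (M * R * M) * Ok"
      by (rule lin3[OF OTc Gc R MRM Oc])
    also have "Ok\<^sup>T * (M * R * M) * Ok = (Ok\<^sup>T * M) * R * (M * Ok)"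
      using dims R by (simp add: massoc)
    also have "\<dots> = Ok\<^sup>T * R * Ok" unfolding OTM MO ..
    finally show ?thesis unfolding OGO using Qc R Oc by (simp add: add_sub_cancel_mat[of _ n n])
  qed
  have SXeq: "SX = {G + R - M * R * M | R. R \<in> carrier_mat q q}"
  proof
    show "{G + R - M * R * M | R. R \<in> carrier_mat q q} \<subseteq> SX"
    proof
      fix X assume "X \<in> {G + R - M * R * M | R. R \<in> carrier_mat q q}"
      then obtain R where R: "R \<in> carrier_mat q q" and X: "X = G + R - M * R * M" by auto
      have "M * R * M \<in> carrier_mat q q" using R Mc by simp
      then have "X \<in> carrier_mat q q" unfolding X by (rule minus_carrier_mat)
      then show "X \<in> SX" using SXiff param[OF R] X by simp
    qed
    show "SX \<subseteq> {G + R - M * R * M | R. R \<in> carrier_mat q q}"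
    proof
      fix X assume "X \<in> SX"
      then have Xc: "X \<in> carrier_mat q q" and OXO: "Ok\<^sup>T * X * Ok = Q" using SXiff by auto
      define R where "R = X - G"
      have Rc: "R \<in> carrier_mat q q" unfolding R_def using Gc by (rule minus_carrier_mat)
      have ORO: "Ok\<^sup>T * R * Ok = 0\<^sub>m n n"
      proof -
        have "Ok\<^sup>T * R = Ok\<^sup>T * X - Ok\<^sup>T * G" unfolding R_def by (rule mult_minus_distrib_mat[OF OTc Xc Gc])
        then have "Ok\<^sup>T * R * Ok = (Ok\<^sup>T * X - Ok\<^sup>T * G) * Ok" by simp
        also have "\<dots> = Ok\<^sup>T * X * Ok - Ok\<^sup>T * G * Ok"
          by (rule minus_mult_distrib_mat, insert OTc Xc Gc Oc, auto)
        also have "\<dots> = 0\<^sub>m n n" unfolding OXO OGO using Qc by simp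
        finally show ?thesis .
      qed
      have MRM: "M * R * M = 0\<^sub>m q q"
      proof -
        have "M * R * M = (Ok * Wi) * (Ok\<^sup>T * R * Ok) * (Wi * Ok\<^sup>T)"
          unfolding Md using dims Rc by (simp add: massoc)
        also have "\<dots> = 0\<^sub>m q q" unfolding ORO using Oc Wic by simp
        finally show ?thesis .
      qed
      have "X = G + R - M * R * M"
      proof (rule eq_matI)
        fix i j assume "i < dim_row (G + R - M * R * M)" "j < dim_col (G + R - M * R * M)"
        then have ij: "i < q" "j < q" using Gc Mc by auto
        show "X $$ (i, j) = (G + R - M * R * M) $$ (i, j)"
          unfolding MRM using ij Gc Xc by (simp add: R_def)
      qed (insert Xc Gc Rc Mc, auto)
      then show "X \<in> {G + R - M * R * M | R. R \<in> carrier_mat q q}" using Rc by blast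
    qed
  qed
  have NTc: "N\<^sup>T \<in> carrier_mat q n" using Nc by simp
  have GT: "G\<^sup>T = G" unfolding G_def using transpose_mult[OF NTc Nc] by simp
  have MM: "M * M = M"
  proof -
    have "(Ok * Wi * Ok\<^sup>T) * M = Ok * (Wi * (Ok\<^sup>T * M))" using dims by (simp add: massoc)
    then have "M * M = Ok * (Wi * Ok\<^sup>T)" unfolding Md[symmetric] OTM .
    also have "\<dots> = M" unfolding Md using dims by (simp add: massoc)
    finally show ?thesis .
  qed
  have MT: "M\<^sup>T = M"
  proof -
    have "M\<^sup>T = (Ok\<^sup>T)\<^sup>T * (Ok * Wi)\<^sup>T" unfolding Md by (rule transpose_mult, insert Oc Wic, auto)
    also have "(Ok * Wi)\<^sup>T = Wi\<^sup>T * Ok\<^sup>T" by (rule transpose_mult, insert Oc Wic, auto)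
    finally show ?thesis unfolding WiT Md using dims by (simp add: massoc)
  qed
  define P where "P = 1\<^sub>m q - M"
  have Pc: "P \<in> carrier_mat q q" unfolding P_def using Mc by (rule minus_carrier_mat)
  have PT: "P\<^sup>T = P" unfolding P_def using transpose_minus[of "1\<^sub>m q" q q M] Mc MT by simp
  have PP: "P\<^sup>T * P = 1\<^sub>m q - M"
  proof -
    have e1: "P * P = 1\<^sub>m q * P - M * P" unfolding P_def by (rule minus_mult_distrib_mat, insert Mc, auto)
    have e2: "M * P = M * 1\<^sub>m q - M * M" unfolding P_def by (rule mult_minus_distrib_mat, insert Mc, auto)
    have e3: "M * 1\<^sub>m q - M * M = 0\<^sub>m q q" unfolding MM using Mc by simp
    have e4: "1\<^sub>m q * P = P" using Pc by simp
    have e5: "P - 0\<^sub>m q q = P" using Pc by (intro eq_matI, auto)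
    have PPP: "P * P = P" by (simp only: e1 e2 e3 e4 e5)
    show ?thesis unfolding PT PPP by (simp add: P_def)
  qed
  define X0 where "X0 = G + P\<^sup>T * P"
  have X0eq: "X0 = G + 1\<^sub>m q - M * 1\<^sub>m q * M"
  proof -
    have "M * 1\<^sub>m q * M = M" using Mc MM by simp
    then show ?thesis unfolding X0_def PP using Gc Mc by (intro eq_matI, auto)
  qed
  have X0SX: "X0 \<in> SX"
  proof -
    have "(1\<^sub>m q :: real mat) \<in> carrier_mat q q" by simp
    then show ?thesis unfolding SXeq X0eq by blast
  qed
  have X0pd: "pos_def q X0"
  proof -
    have PTPc: "P\<^sup>T * P \<in> carrier_mat q q" using Pc by simp
    have X0c: "X0 \<in> carrier_mat q q" unfolding X0_def using Gc PTPc by simp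
    have "(P\<^sup>T * P)\<^sup>T = P\<^sup>T * P" using transpose_mult[of "P\<^sup>T" q q P q] Pc by simp
    then have X0T: "X0\<^sup>T = X0" unfolding X0_def using transpose_add[OF Gc PTPc] GT by simp
    have pd: "x \<bullet> (X0 *\<^sub>v x) > 0" if x: "x \<in> carrier_vec q" "x \<noteq> 0\<^sub>v q" for x
    proof -
      have "X0 *\<^sub>v x = G *\<^sub>v x + (P\<^sup>T * P) *\<^sub>v x" unfolding X0_def
        by (rule add_mult_distrib_mat_vec[OF Gc PTPc x(1)])
      then have "x \<bullet> (X0 *\<^sub>v x) = x \<bullet> (G *\<^sub>v x) + x \<bullet> ((P\<^sup>T * P) *\<^sub>v x)"
        using scalar_prod_add_distrib[of x q "G *\<^sub>v x" "(P\<^sup>T * P) *\<^sub>v x"] x Gc PTPc by simp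
      also have "x \<bullet> (G *\<^sub>v x) = (N *\<^sub>v x) \<bullet> (N *\<^sub>v x)" unfolding G_def by (rule quad_form[OF Nc x(1)])
      also have "x \<bullet> ((P\<^sup>T * P) *\<^sub>v x) = (P *\<^sub>v x) \<bullet> (P *\<^sub>v x)" by (rule quad_form[OF Pc x(1)])
      finally have eq: "x \<bullet> (X0 *\<^sub>v x) = (N *\<^sub>v x) \<bullet> (N *\<^sub>v x) + (P *\<^sub>v x) \<bullet> (P *\<^sub>v x)" .
      have Nxc: "N *\<^sub>v x \<in> carrier_vec n" using Nc x by simp
      have Pxc: "P *\<^sub>v x \<in> carrier_vec q" using Pc x by simp
      have nn1: "(N *\<^sub>v x) \<bullet> (N *\<^sub>v x) \<ge> 0"
        using vv_pos[OF Nxc] Nxc by (cases "N *\<^sub>v x = 0\<^sub>v n", auto simp: less_imp_le)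
      have nn2: "(P *\<^sub>v x) \<bullet> (P *\<^sub>v x) \<ge> 0"
        using vv_pos[OF Pxc] Pxc by (cases "P *\<^sub>v x = 0\<^sub>v q", auto simp: less_imp_le)
      show ?thesis
      proof (cases "N *\<^sub>v x = 0\<^sub>v n")
        case False
        then show ?thesis using vv_pos[OF Nxc] nn2 eq by simp
      next
        case Nx: True
        show ?thesis
        proof (cases "P *\<^sub>v x = 0\<^sub>v q")
          case False
          then show ?thesis using vv_pos[OF Pxc] nn1 eq by simp
        next
          case Px: True
          define y where "y = Wi *\<^sub>v (Ok\<^sup>T *\<^sub>v x)"
          have yc: "y \<in> carrier_vec n" unfolding y_def using Wic OTc x by simp
          have Nxy: "N *\<^sub>v x = S *\<^sub>v y"
          proof -
            have "N *\<^sub>v x = (S * Wi) *\<^sub>v (Ok\<^sup>T *\<^sub>v x)" unfolding Nd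
              by (rule assoc_mult_mat_vec, insert Sc Wic OTc x, auto)
            also have "\<dots> = S *\<^sub>v y" unfolding y_def
              by (rule assoc_mult_mat_vec, insert Sc Wic OTc x, auto)
            finally show ?thesis .
          qed
          have Mxy: "M *\<^sub>v x = Ok *\<^sub>v y"
          proof -
            have "M *\<^sub>v x = (Ok * Wi) *\<^sub>v (Ok\<^sup>T *\<^sub>v x)" unfolding Md
              by (rule assoc_mult_mat_vec, insert Oc Wic OTc x, auto)
            also have "\<dots> = Ok *\<^sub>v y" unfolding y_def
              by (rule assoc_mult_mat_vec, insert Oc Wic OTc x, auto)
            finally show ?thesis .
          qed
          have "y = 0\<^sub>v n" by (rule pos_def_inj[OF Spd yc], insert Nx Nxy, simp)
          then have Mx0: "M *\<^sub>v x = 0\<^sub>v q" unfolding Mxy using Oc by (intro eq_vecI, auto)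
          have "P *\<^sub>v x = 1\<^sub>m q *\<^sub>v x - M *\<^sub>v x" unfolding P_def
            by (rule minus_mult_distrib_mat_vec, insert Mc x, auto)
          also have "\<dots> = x" unfolding Mx0 using x by simp
          finally have "x = 0\<^sub>v q" using Px by simp
          then show ?thesis using x by simp
        qed
      qed
    qed
    show ?thesis unfolding pos_def_def using X0c X0T pd by auto
  qed
  have X0SXp: "X0 \<in> SXp" unfolding SXp_def using X0SX X0pd q_def by simp
  have iii: "SXp = {G}" if qn: "p * K = n"
  proof -
    have qn': "q = n" using qn q_def by simp
    have Oc': "Ok \<in> carrier_mat n n" using Oc qn' by simp
    have Oinj': "x = 0\<^sub>v n" if "x \<in> carrier_vec n" "Ok *\<^sub>v x = 0\<^sub>v n" for x
      using Oinj[of x] that qn' by simp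
    note Op = minv_props[OF Oc' Oinj']
    have M1: "M = 1\<^sub>m q"
    proof -
      have "M = M * (Ok * minv Ok)" using Op Mc qn' by simp
      also have "\<dots> = (M * Ok) * minv Ok" by (rule assoc_mult_mat[symmetric], insert Mc Oc Op qn', auto)
      also have "\<dots> = 1\<^sub>m q" unfolding MO using Op qn' by simp
      finally show ?thesis .
    qed
    have "SX = {G}"
    proof -
      have "G + R - M * R * M = G" if R: "R \<in> carrier_mat q q" for R
        unfolding M1 using R Gc by (simp add: add_sub_cancel_mat[of _ q q])
      moreover have "(0\<^sub>m q q :: real mat) \<in> carrier_mat q q" by simp
      ultimately show ?thesis unfolding SXeq by (auto intro!: exI[of _ "0\<^sub>m q q"])
    qed
    then show ?thesis using X0SXp unfolding SXp_def by auto
  qed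
  show ?thesis using Gin SXeq X0SXp iii unfolding G_def q_def by blast
qed

end
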